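(* Let $\gamma>0$, $R>0$, $\Omega=B(0,R)\subset\mathbb{R}^2$, and let $m>8\pi(1+\gamma)$. Then there exists a sequence $(u_k,v_k)$ of nonnegative radially symmetric functions on $\Omega$ with $\int_\Omega u_k\,dx=m$ for all $k$, such that $\mathcal{F}(u_k,v_k)\to-\infty$ as $k\to\infty$.
   Context: $\mathcal{F}(u,v):=\int_\Omega G(u)dx-\int_\Omega uv\,dx+\frac12\int_\Omega|\nabla v|^2+\frac12\int_\Omega v^2$, where $G(u)=\gamma(1+u)\ln(1+u)+u\ln u-u(\gamma(1+\ln2)+1)-\gamma\ln2+\gamma+1$. *)

theory Defs
  imports "HOL-Analysis.Analysis"
begin

type_synonym R2 = "real ^ 2"

definition Gfun :: "real \<Rightarrow> real \<Rightarrow> real" where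
  "Gfun \<gamma> u = \<gamma> * (1 + u) * ln (1 + u) + u * ln u - u * (\<gamma> * (1 + ln 2) + 1)
                 - \<gamma> * ln 2 + \<gamma> + 1"

definition grad_sq :: "(R2 \<Rightarrow> real) \<Rightarrow> R2 \<Rightarrow> real" where
  "grad_sq v x = (\<Sum>i\<in>UNIV. (frechet_derivative v (at x) (axis i 1))\<^sup>2)"

definition Ffun :: "real \<Rightarrow> real \<Rightarrow> (R2 \<Rightarrow> real) \<Rightarrow> (R2 \<Rightarrow> real) \<Rightarrow> real" where
  "Ffun \<gamma> R u v =
     integral (ball 0 R) (\<lambda>x. Gfun \<gamma> (u x))
     - integral (ball 0 R) (\<lambda>x. u x * v x)
     + 1/2 * integral (ball 0 R) (\<lambda>x. grad_sq v x)
     + 1/2 * integral (ball 0 R) (\<lambda>x. (v x)\<^sup>2)"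

definition radial_on :: "R2 set \<Rightarrow> (R2 \<Rightarrow> real) \<Rightarrow> bool" where
  "radial_on S f \<longleftrightarrow> (\<forall>x\<in>S. \<forall>y\<in>S. norm x = norm y \<longrightarrow> f x = f y)"

definition admissible :: "real \<Rightarrow> real \<Rightarrow> (R2 \<Rightarrow> real) \<Rightarrow> (R2 \<Rightarrow> real) \<Rightarrow> bool" where
  "admissible \<gamma> R u v \<longleftrightarrow>
     (\<forall>x\<in>ball 0 R. u x \<ge> 0 \<and> v x \<ge> 0) \<and>
     radial_on (ball 0 R) u \<and> radial_on (ball 0 R) v \<and>
     continuous_on (cball 0 R) u \<and> continuous_on (cball 0 R) v \<and>
     (\<forall>x\<in>ball 0 R. v differentiable (at x)) \<and>
     u absolutely_integrable_on ball 0 R \<and>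
     (\<lambda>x. Gfun \<gamma> (u x)) absolutely_integrable_on ball 0 R \<and>
     (\<lambda>x. u x * v x) absolutely_integrable_on ball 0 R \<and>
     (\<lambda>x. grad_sq v x) absolutely_integrable_on ball 0 R \<and>
     (\<lambda>x. (v x)\<^sup>2) absolutely_integrable_on ball 0 R"

end

theory Submission
  imports Defs "HOL-Real_Asymp.Real_Asymp"
begin
lemma cont_aint:
  fixes f :: "R2 \<Rightarrow> real"
  assumes "continuous_on (cball 0 R) f"
  shows "f absolutely_integrable_on ball 0 R"
proof -
  obtain B where B: "\<And>x. x \<in> cball 0 R \<Longrightarrow> norm (f x) \<le> B"
    using compact_imp_bounded[OF compact_continuous_image[OF assms compact_cball]]
    unfolding bounded_iff by (metis image_eqI real_norm_def)
  show ?thesis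
  proof (rule measurable_bounded_by_integrable_imp_absolutely_integrable[where g="\<lambda>x. B"])
    show "f \<in> borel_measurable (lebesgue_on (ball 0 R))"
      by (rule continuous_imp_measurable_on_sets_lebesgue)
         (auto intro: continuous_on_subset[OF assms])
    show "(\<lambda>x. B) integrable_on ball 0 R"
      by (rule integrable_on_const) (simp add: bounded_set_imp_lmeasurable)
  qed (use B in auto)
qed

lemma int_const_ball: "r \<ge> 0 \<Longrightarrow> integral (ball (0::R2) r) (\<lambda>x. c) = r^2 * pi * c"
proof -
  assume r: "r \<ge> 0"
  have "integral (ball (0::R2) r) (\<lambda>x. 1 * c) = integral (ball (0::R2) r) (\<lambda>x. 1) * c"
    by (rule integral_mult_left)
  also have "integral (ball (0::R2) r) (\<lambda>x. 1::real) = measure lebesgue (ball (0::R2) r)"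
    by (rule lmeasure_integral[symmetric]) simp
  finally show ?thesis using circle_area[OF r, of 0] by simp
qed

lemma xlnx_cont: "isCont (\<lambda>t::real. t * ln t) x"
proof (cases "x = 0")
  case True
  have l: "((\<lambda>t::real. t * ln t) \<longlongrightarrow> 0) (at_left 0)"
  proof -
    have "((\<lambda>t::real. t * ln (-t)) \<longlongrightarrow> 0) (at_left 0)" by real_asymp
    thus ?thesis by (simp add: ln_minus)
  qed
  have r: "((\<lambda>t::real. t * ln t) \<longlongrightarrow> 0) (at_right 0)" by real_asymp
  show ?thesis using True filterlim_split_at[OF l r] by (simp add: isCont_def)
next
  case False
  then show ?thesis by (intro continuous_intros) auto
qed


definition hh :: "nat \<Rightarrow> real \<Rightarrow> R2 \<Rightarrow> real" where
  "hh p e x = 1 / (max (norm x) e) ^ p"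

lemma hh_aint: "e > 0 \<Longrightarrow> hh p e absolutely_integrable_on ball 0 R"
  unfolding hh_def by (rule cont_aint) (intro continuous_intros, auto)

lemma hh_step:
  assumes "0 < e'" "e' \<le> e" "e \<le> R"
  shows "integral (ball 0 R) (hh p e') \<le> integral (ball 0 R) (hh p e) + (1/e'^p - 1/e^p) * (e^2 * pi)"
proof -
  define c where "c = 1/e'^p - 1/e^p"
  define g where "g = (\<lambda>x::R2. if x \<in> ball 0 e then c else 0)"
  have e: "e > 0" using assms by simp
  have ic: "(\<lambda>x::R2. c) integrable_on ball 0 e" by (rule integrable_on_const) simp
  have sub: "ball (0::R2) e \<inter> ball 0 R = ball 0 e" using assms by auto
  have gi: "g integrable_on ball 0 R"
    unfolding g_def using integrable_restrict_Int[of "ball (0::R2) e" "\<lambda>x. c" "ball 0 R"] ic sub by simp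
  have gint: "integral (ball 0 R) g = e^2 * pi * c"
    unfolding g_def integral_restrict_Int sub using int_const_ball[of e c] e by simp
  have hi: "hh p e integrable_on ball 0 R" "hh p e' integrable_on ball 0 R"
    using hh_aint[OF e] hh_aint[OF assms(1)] set_lebesgue_integral_eq_integral(1) by blast+
  have pt: "hh p e' x \<le> hh p e x + g x" if "x \<in> ball 0 R" for x
  proof (cases "norm x < e")
    case True
    have "max (norm x) e' \<ge> e'" by simp
    hence "1 / (max (norm x) e') ^ p \<le> 1 / e'^p"
      using assms(1) by (intro divide_left_mono power_mono) auto
    moreover have "max (norm x) e = e" using True by simp
    ultimately show ?thesis using True by (simp add: hh_def g_def c_def)
  next
    case False
    hence "max (norm x) e' = norm x" "max (norm x) e = norm x" using assms by auto
    then show ?thesis using False by (simp add: hh_def g_def)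
  qed
  have "integral (ball 0 R) (hh p e') \<le> integral (ball 0 R) (\<lambda>x. hh p e x + g x)"
    by (rule integral_le[OF hi(2) integrable_add[OF hi(1) gi] pt])
  also have "\<dots> = integral (ball 0 R) (hh p e) + integral (ball 0 R) g"
    by (rule integral_add[OF hi(1) gi])
  finally show ?thesis using gint c_def by (simp add: mult.commute)
qed

lemma hh_base:
  assumes "R > 0" shows "integral (ball 0 R) (hh p R) = R^2 * pi / R^p"
proof -
  have "integral (ball 0 R) (hh p R) = integral (ball 0 R) (\<lambda>x::R2. 1 / R^p)"
    by (rule integral_cong) (simp add: hh_def max_def)
  thus ?thesis using int_const_ball[of R] assms by simp
qed

lemma hh2_bound:
  assumes "R > 0" "b > 1"
  shows "integral (ball 0 R) (hh 2 (R / b^k)) \<le> pi + k * pi * (b^2 - 1)"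
proof (induction k)
  case 0
  then show ?case using hh_base[OF assms(1), of 2] assms by simp
next
  case (Suc k)
  have bk: "b^k > 0" "b^k \<ge> 1" using assms by auto
  have le: "R / b^Suc k \<le> R / b^k" using assms bk by (simp add: divide_left_mono mult_pos_pos)
  have le2: "R / b^k \<le> R" using assms bk by (simp add: divide_le_eq)
  have "(1/(R / b^Suc k)^2 - 1/(R/b^k)^2) * ((R/b^k)^2 * pi) = pi * (b^2 - 1)"
    using assms bk by (simp add: field_simps power_mult_distrib power2_eq_square)
  then show ?case using hh_step[of "R / b^Suc k" "R/b^k" R 2] Suc le le2 assms bk
    by (simp add: algebra_simps)
qed

lemma hh1_bound:
  assumes "R > 0" "b > 1"
  shows "integral (ball 0 R) (hh 1 (R / b^k)) \<le> pi * R * (1 + b) - pi * R * b / b^k"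
proof (induction k)
  case 0
  then show ?case using hh_base[OF assms(1), of 1] assms by (simp add: power2_eq_square algebra_simps)
next
  case (Suc k)
  have bk: "b^k > 0" "b^k \<ge> 1" using assms by auto
  have le: "R / b^Suc k \<le> R / b^k" using assms bk by (simp add: divide_left_mono mult_pos_pos)
  have le2: "R / b^k \<le> R" using assms bk by (simp add: divide_le_eq)
  have "(1/(R / b^Suc k)^1 - 1/(R/b^k)^1) * ((R/b^k)^2 * pi) = pi * R * (b - 1) / b^k"
    using assms bk by (simp add: field_simps power2_eq_square)
  moreover have "pi * R * (1 + b) - pi * R * b / b^k + pi * R * (b - 1) / b^k = pi * R * (1 + b) - pi * R * b / b^Suc k"
    using assms bk by (simp add: field_simps)
  ultimately show ?case using hh_step[of "R / b^Suc k" "R/b^k" R 1] Suc le le2 assms bk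
    by simp
qed



lemma v_deriv:
  fixes x :: R2 and A c e :: real
  assumes "e > 0" "c > 0"
  shows "((\<lambda>x. A/2 * ln (c / (x \<bullet> x + e^2))) has_derivative (\<lambda>h. - A * (x \<bullet> h) / (x \<bullet> x + e^2))) (at x)"
proof -
  have pos: "\<And>y::R2. y \<bullet> y + e^2 > 0" using assms by (simp add: add_nonneg_pos)
  have eq: "(\<lambda>x::R2. A/2 * ln (c / (x \<bullet> x + e^2))) = (\<lambda>x. A/2 * (ln c - ln (x \<bullet> x + e^2)))"
    apply (rule ext) subgoal for y using pos[of y] assms by (simp add: ln_div) done
  have d1: "((\<lambda>x::R2. x \<bullet> x + e^2) has_derivative (\<lambda>h. x \<bullet> h + h \<bullet> x)) (at x)"
    by (auto intro!: derivative_eq_intros)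
  have d2: "((\<lambda>x::R2. ln (x \<bullet> x + e^2)) has_derivative (\<lambda>h. (x \<bullet> h + h \<bullet> x) / (x \<bullet> x + e^2))) (at x)"
    using DERIV_compose_FDERIV[OF DERIV_ln[OF pos[of x]] d1] by (simp add: divide_inverse mult.commute)
  show ?thesis unfolding eq
    apply (rule has_derivative_eq_rhs)
     apply (rule has_derivative_mult_right[OF has_derivative_diff[OF has_derivative_const d2]])
    by (auto simp: inner_commute field_simps)
qed

lemma grad_v:
  fixes A c e :: real
  assumes "e > 0" "c > 0"
  shows "grad_sq (\<lambda>x. A/2 * ln (c / (x \<bullet> x + e^2))) x = A^2 * (x \<bullet> x) / (x \<bullet> x + e^2)^2"
proof -
  have "frechet_derivative (\<lambda>x. A/2 * ln (c / (x \<bullet> x + e^2))) (at x) = (\<lambda>h. - A * (x \<bullet> h) / (x \<bullet> x + e^2))"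
    using frechet_derivative_at[OF v_deriv[OF assms]] by simp
  hence "grad_sq (\<lambda>x. A/2 * ln (c / (x \<bullet> x + e^2))) x = (\<Sum>i\<in>UNIV. (- A * (x $ i) / (x \<bullet> x + e^2))^2)"
    by (simp add: grad_sq_def inner_axis)
  also have "\<dots> = (\<Sum>i\<in>UNIV. A^2 / (x \<bullet> x + e^2)^2 * (x $ i * x $ i))"
    by (intro sum.cong) (auto simp: power2_eq_square field_simps)
  also have "\<dots> = A^2 / (x \<bullet> x + e^2)^2 * (\<Sum>i\<in>UNIV. x $ i * x $ i)"
    by (rule sum_distrib_left[symmetric])
  also have "(\<Sum>i\<in>UNIV. x $ i * x $ i) = x \<bullet> x" by (simp add: inner_vec_def)
  finally show ?thesis by simp
qed

lemma G_bound:
  fixes g t U :: real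
  assumes g: "g > 0" and t: "0 \<le> t" "t \<le> U"
  shows "Gfun g t \<le> (1+g) * t * ln (1+U) + g + 1"
proof -
  have h1: "ln (1+t) \<le> t" using ln_le_minus_one[of "1+t"] t by simp
  have h2: "ln (1+t) \<le> ln (1+U)" using t by simp
  have h3: "t * ln t \<le> t * ln (1+U)"
  proof (cases "t = 0")
    case False
    hence "ln t \<le> ln (1+U)" using t by simp
    thus ?thesis using t by (intro mult_left_mono) auto
  qed simp
  have h4: "ln 2 \<ge> (0::real)" by simp
  have h5: "g * t * ln (1+t) \<le> g * t * ln (1+U)" using h2 g t by (intro mult_left_mono) auto
  have h6: "g * t * ln 2 \<ge> 0" "g * ln 2 \<ge> 0" using g t h4 by auto
  have "Gfun g t = g * ln (1+t) + g * t * ln (1+t) + t * ln t - t * g - g * t * ln 2 - t - g * ln 2 + g + 1"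
    unfolding Gfun_def by (simp add: algebra_simps)
  also have "\<dots> \<le> g * t + g * t * ln (1+U) + t * ln (1+U) - t * g + g + 1"
    using h1 h3 h5 h6 g t mult_left_mono[OF h1, of g] by linarith
  finally show ?thesis by (simp add: algebra_simps)
qed

lemma xlnx_cont_on: "continuous_on S f \<Longrightarrow> continuous_on S (\<lambda>x. f x * ln (f x :: real))"
  using continuous_on_compose2[OF continuous_at_imp_continuous_on[OF ballI[OF xlnx_cont]], of S f UNIV]
  by auto

lemma G_cont: "continuous_on S f \<Longrightarrow> continuous_on S (\<lambda>x. Gfun g (f x))"
proof -
  assume f: "continuous_on S f"
  have eq: "(\<lambda>x. Gfun g (f x)) = (\<lambda>x. g * ((1 + f x) * ln (1 + f x)) + f x * ln (f x) - f x * (g * (1 + ln 2) + 1) - g * ln 2 + g + 1)"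
    by (simp add: Gfun_def algebra_simps)
  show ?thesis unfolding eq
    by (intro continuous_intros xlnx_cont_on f)
qed

context
  fixes R b m A :: real
  assumes R: "R > 0" and b: "b > 1" and m: "m > 0" and A: "A > 0"
begin

definition "eps k = R / b^k"
definition "wq k x = max 0 (1 - norm (x::R2) / eps k)"
definition "WW k = integral (ball 0 R) (wq k)"
definition "uf k x = m / WW k * wq k x"
definition "vf k (x::R2) = A/2 * ln ((R^2 + (eps k)^2) / (x \<bullet> x + (eps k)^2))"

lemma eps_pos: "eps k > 0" and eps_le: "eps k \<le> R"
proof -
  have "b^k \<ge> 1" using b by simp
  thus "eps k > 0" "eps k \<le> R" unfolding eps_def using R b by (auto simp: divide_le_eq)
qed

lemma w_cont: "continuous_on UNIV (wq k)"
proof -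
  have "eps k \<noteq> 0" using eps_pos[of k] by simp
  thus ?thesis unfolding wq_def by (intro continuous_intros) auto
qed

lemma w_aint: "wq k absolutely_integrable_on ball 0 R"
  by (rule cont_aint) (rule continuous_on_subset[OF w_cont], auto)

lemma w_int: "wq k integrable_on ball 0 R"
  using w_aint set_lebesgue_integral_eq_integral(1) by blast

lemma w_ge0: "wq k x \<ge> 0" and w_le1: "wq k x \<le> 1"
  unfolding wq_def using eps_pos[of k] by auto

lemma W_lower: "WW k \<ge> (eps k)^2 * pi / 8"
proof -
  define e where "e = eps k"
  have e: "e > 0" "e \<le> R" using eps_pos eps_le e_def by auto
  define g where "g = (\<lambda>x::R2. if x \<in> ball 0 (e/2) then 1/2 else (0::real))"
  have sub: "ball (0::R2) (e/2) \<inter> ball 0 R = ball 0 (e/2)" using e by auto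
  have ic: "(\<lambda>x::R2. 1/2::real) integrable_on ball 0 (e/2)" by (rule integrable_on_const) simp
  have gi: "g integrable_on ball 0 R"
    unfolding g_def using integrable_restrict_Int[of "ball (0::R2) (e/2)" "\<lambda>x. 1/2::real" "ball 0 R"] ic sub by simp
  have gint: "integral (ball 0 R) g = (e/2)^2 * pi * (1/2)"
    unfolding g_def integral_restrict_Int sub using int_const_ball[of "e/2" "1/2"] e by simp
  have "integral (ball 0 R) g \<le> integral (ball 0 R) (wq k)"
  proof (rule integral_le[OF gi w_int])
    fix x :: R2 assume "x \<in> ball 0 R"
    show "g x \<le> wq k x"
    proof (cases "norm x < e/2")
      case True
      hence "norm x / e < 1/2" using e by (simp add: divide_less_eq)
      hence "1 - norm x / e \<ge> 1/2" by linarith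
      hence "wq k x \<ge> 1/2" unfolding wq_def e_def[symmetric] by linarith
      then show ?thesis using True by (simp add: g_def)
    qed (simp add: g_def w_ge0)
  qed
  thus ?thesis using gint by (simp add: WW_def e_def power2_eq_square)
qed

lemma W_pos: "WW k > 0"
proof -
  have "0 < (eps k)^2 * pi / 8" using eps_pos[of k] by simp
  thus ?thesis using W_lower[of k] by linarith
qed

lemma u_int: "integral (ball 0 R) (uf k) = m"
  unfolding uf_def using W_pos[of k] by (simp add: WW_def)

lemma u_ge0: "uf k x \<ge> 0" and u_le: "uf k x \<le> m / WW k"
proof -
  have "m / WW k * wq k x \<le> m / WW k * 1"
    using W_pos[of k] m w_le1[of k x] by (intro mult_left_mono) auto
  thus "uf k x \<le> m / WW k" unfolding uf_def by simp
  show "uf k x \<ge> 0" unfolding uf_def using W_pos[of k] m w_ge0[of k x] by simp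
qed

lemma U_le: "m / WW k \<le> 8 * m / (pi * (eps k)^2)"
proof -
  have "m / WW k \<le> m / ((eps k)^2 * pi / 8)"
    using W_lower[of k] W_pos[of k] eps_pos[of k] m
    by (intro divide_left_mono) auto
  thus ?thesis by (simp add: field_simps)
qed


lemma u_cont: "continuous_on UNIV (uf k)"
  unfolding uf_def by (intro continuous_intros w_cont[unfolded continuous_on_eq_continuous_within] continuous_on_mult_left w_cont)

lemma intG_le: "integral (ball 0 R) (\<lambda>x. Gfun g (uf k x)) \<le> (1+g) * ln (1 + m / WW k) * m + (g+1) * (R^2 * pi)"
  if g: "g > 0" for g
proof -
  have Gi: "(\<lambda>x. Gfun g (uf k x)) integrable_on ball 0 R"
    using cont_aint[OF G_cont[OF continuous_on_subset[OF u_cont]]] set_lebesgue_integral_eq_integral(1) by blast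
  have ui: "uf k integrable_on ball 0 R"
    using cont_aint[OF continuous_on_subset[OF u_cont]] set_lebesgue_integral_eq_integral(1) by blast
  have ci: "(\<lambda>x::R2. g+1) integrable_on ball 0 R" by (rule integrable_on_const) simp
  have iu: "(\<lambda>x. (1+g) * ln (1 + m / WW k) * uf k x) integrable_on ball 0 R"
      using integrable_on_cmult_left[OF ui, of "(1+g) * ln (1 + m / WW k)"] by simp
  have ri: "(\<lambda>x. (1+g) * ln (1 + m / WW k) * uf k x + (g+1)) integrable_on ball 0 R"
    by (rule integrable_add[OF iu ci])
  have "integral (ball 0 R) (\<lambda>x. Gfun g (uf k x)) \<le> integral (ball 0 R) (\<lambda>x. (1+g) * ln (1 + m / WW k) * uf k x + (g+1))"
    by (rule integral_le[OF Gi ri]) (use G_bound[OF g u_ge0 u_le] in \<open>simp add: algebra_simps\<close>)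
  also have "\<dots> = integral (ball 0 R) (\<lambda>x. (1+g) * ln (1 + m / WW k) * uf k x) + integral (ball 0 R) (\<lambda>x::R2. g+1)"
    by (rule integral_add[OF iu ci])
  also have "\<dots> = (1+g) * ln (1 + m / WW k) * integral (ball 0 R) (uf k) + integral (ball 0 R) (\<lambda>x::R2. g+1)"
    by simp
  also have "\<dots> = (1+g) * ln (1 + m / WW k) * m + (g+1) * (R^2 * pi)"
    using u_int int_const_ball[of R "g+1"] R by simp
  finally show ?thesis .
qed


lemma c_pos: "R^2 + (eps k)^2 > 0" using R by (simp add: add_pos_nonneg)

lemma v_cont: "continuous_on UNIV (vf k)"
proof -
  have p: "\<And>x::R2. x \<bullet> x + (eps k)^2 > 0" using eps_pos[of k] by (simp add: add_nonneg_pos)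
  have p1: "\<forall>x::R2\<in>UNIV. x \<bullet> x + (eps k)^2 \<noteq> 0" using p by (metis less_irrefl)
  have p2: "\<forall>x::R2\<in>UNIV. (R^2 + (eps k)^2) / (x \<bullet> x + (eps k)^2) \<noteq> 0"
    using p c_pos[of k] by (metis divide_pos_pos less_irrefl)
  show ?thesis unfolding vf_def
    apply (intro continuous_intros) using p1 p2 by blast+
qed

lemma v_ge0: "x \<in> ball 0 R \<Longrightarrow> vf k x \<ge> 0"
proof -
  assume x: "x \<in> ball 0 R"
  have "x \<bullet> x = norm x ^ 2" by (simp add: power2_norm_eq_inner)
  also have "\<dots> \<le> R^2" using x by (intro power_mono) auto
  finally have "x \<bullet> x + (eps k)^2 \<le> R^2 + (eps k)^2" by simp
  moreover have "x \<bullet> x + (eps k)^2 > 0" using eps_pos[of k] by (simp add: add_nonneg_pos)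
  ultimately have "(R^2 + (eps k)^2) / (x \<bullet> x + (eps k)^2) \<ge> 1" by simp
  thus ?thesis unfolding vf_def using A by simp
qed

definition "V0 k = A/2 * ln ((R^2 + (eps k)^2) / (2 * (eps k)^2))"

lemma uv_int: "integral (ball 0 R) (\<lambda>x. uf k x * vf k x) \<ge> V0 k * m"
proof -
  define e where "e = eps k"
  have e: "e > 0" using eps_pos e_def by auto
  have ui: "uf k integrable_on ball 0 R"
    using cont_aint[OF continuous_on_subset[OF u_cont]] set_lebesgue_integral_eq_integral(1) by blast
  have uvi: "(\<lambda>x. uf k x * vf k x) integrable_on ball 0 R"
    using cont_aint[OF continuous_on_subset[OF continuous_on_mult[OF u_cont v_cont]]]
      set_lebesgue_integral_eq_integral(1) by blast
  have iu: "(\<lambda>x. V0 k * uf k x) integrable_on ball 0 R"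
    using integrable_on_cmult_left[OF ui, of "V0 k"] by simp
  have "integral (ball 0 R) (\<lambda>x. V0 k * uf k x) \<le> integral (ball 0 R) (\<lambda>x. uf k x * vf k x)"
  proof (rule integral_le[OF iu uvi])
    fix x :: R2 assume x: "x \<in> ball 0 R"
    show "V0 k * uf k x \<le> uf k x * vf k x"
    proof (cases "norm x < e")
      case True
      have "x \<bullet> x = norm x ^ 2" by (simp add: power2_norm_eq_inner)
      also have "\<dots> \<le> e^2" using True by (intro power_mono) auto
      finally have le: "x \<bullet> x + e^2 \<le> 2 * e^2" by simp
      have pos: "x \<bullet> x + e^2 > 0" using e by (simp add: add_nonneg_pos)
      have "(R^2 + e^2) / (2 * e^2) \<le> (R^2 + e^2) / (x \<bullet> x + e^2)"
        using le pos c_pos[of k] e_def e by (intro divide_left_mono) (auto intro: mult_pos_pos)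
      hence "ln ((R^2 + e^2) / (2 * e^2)) \<le> ln ((R^2 + e^2) / (x \<bullet> x + e^2))"
        using e c_pos[of k] e_def pos by (subst ln_le_cancel_iff) (auto intro: divide_pos_pos)
      hence "V0 k \<le> vf k x" unfolding V0_def vf_def e_def[symmetric] using A by simp
      thus ?thesis using u_ge0[of k x] by (metis mult.commute mult_right_mono)
    next
      case False
      hence "1 - norm x / e \<le> 0" using e by (simp add: field_simps)
      hence "uf k x = 0" unfolding uf_def wq_def e_def[symmetric] by simp
      thus ?thesis by simp
    qed
  qed
  thus ?thesis using u_int by simp
qed


lemma vf_eq: "vf k = (\<lambda>x. A/2 * ln ((R^2 + (eps k)^2) / (x \<bullet> x + (eps k)^2)))"
  by (rule ext) (simp add: vf_def)

lemma grad_eq: "grad_sq (vf k) = (\<lambda>x. A^2 * (x \<bullet> x) / (x \<bullet> x + (eps k)^2)^2)"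
  by (rule ext, unfold vf_eq, rule grad_v[OF eps_pos c_pos])

lemma M_sq: "(max (norm x) e)^2 \<le> x \<bullet> x + e^2" for x :: R2 and e :: real
  by (simp add: max_def power2_norm_eq_inner[symmetric])

lemma M_pos: "e > 0 \<Longrightarrow> max (norm x) e > 0" for x :: R2 by simp

lemma grad_le: "grad_sq (vf k) x \<le> A^2 * hh 2 (eps k) x"
proof -
  define e where "e = eps k"
  define s where "s = x \<bullet> x"
  define M where "M = max (norm x) e"
  have e: "e > 0" using eps_pos e_def by auto
  have s: "s \<ge> 0" unfolding s_def by simp
  have M: "M > 0" using e M_def by simp
  have M2: "M^2 \<le> s + e^2" using M_sq[of x e] M_def s_def by simp
  have "s * M^2 \<le> (s + e^2) * (s + e^2)"
    using M2 s by (intro mult_mono) auto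
  hence sm: "s * M^2 \<le> (s + e^2)^2" by (simp add: power2_eq_square)
  have se: "s + e^2 > 0" using s e by (simp add: add_nonneg_pos)
  hence D: "(s + e^2)^2 > 0" by simp
  have "s / (s + e^2)^2 = (s * M^2) / ((s + e^2)^2 * M^2)" using M D by simp
  also have "\<dots> \<le> (s + e^2)^2 / ((s + e^2)^2 * M^2)"
    by (rule divide_right_mono[OF sm]) (use D M in simp)
  also have "\<dots> = 1 / M^2" using D by simp
  finally have "s / (s + e^2)^2 \<le> 1 / M^2" .
  hence "A^2 * (s / (s + e^2)^2) \<le> A^2 * (1 / M^2)" by (intro mult_left_mono) auto
  thus ?thesis unfolding grad_eq hh_def e_def[symmetric] s_def[symmetric] M_def[symmetric] by simp
qed

lemma grad_cont: "continuous_on UNIV (grad_sq (vf k))"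
proof -
  have p1: "\<forall>x::R2\<in>UNIV. (x \<bullet> x + (eps k)^2)^2 \<noteq> 0" using eps_pos[of k]
    by (metis add_nonneg_pos inner_ge_zero power_not_zero zero_less_power2 less_irrefl)
  show ?thesis unfolding grad_eq apply (intro continuous_intros) using p1 by blast
qed

lemma grad_int: "integral (ball 0 R) (grad_sq (vf k)) \<le> A^2 * (pi + k * pi * (b^2 - 1))"
proof -
  have gi: "grad_sq (vf k) integrable_on ball 0 R"
    using cont_aint[OF continuous_on_subset[OF grad_cont]] set_lebesgue_integral_eq_integral(1) by blast
  have hi: "hh 2 (eps k) integrable_on ball 0 R"
    using hh_aint[OF eps_pos] set_lebesgue_integral_eq_integral(1) by blast
  have hi2: "(\<lambda>x. A^2 * hh 2 (eps k) x) integrable_on ball 0 R"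
    using integrable_on_cmult_left[OF hi, of "A^2"] by simp
  have "integral (ball 0 R) (grad_sq (vf k)) \<le> integral (ball 0 R) (\<lambda>x. A^2 * hh 2 (eps k) x)"
    by (rule integral_le[OF gi hi2 grad_le])
  also have "\<dots> = A^2 * integral (ball 0 R) (hh 2 (eps k))" by simp
  also have "\<dots> \<le> A^2 * (pi + k * pi * (b^2 - 1))"
    using hh2_bound[OF R b, of k] by (intro mult_left_mono) (auto simp: eps_def)
  finally show ?thesis .
qed

lemma ln_sq_le: "t \<ge> 1 \<Longrightarrow> (ln t)^2 \<le> 16 * sqrt t"
proof -
  assume t: "t \<ge> 1"
  define q where "q = sqrt (sqrt t)"
  have q: "q > 0" using t q_def by simp
  have q2: "q^2 = sqrt t" unfolding q_def using t by simp
  have "q^4 = (q^2)^2" by (simp add: eval_nat_numeral)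
  also have "\<dots> = t" using q2 t by simp
  finally have q4: "q^4 = t" .
  have "ln t = ln (q^4)" using q4 by simp
  also have "\<dots> = 4 * ln q" using q by (simp add: ln_realpow)
  also have "\<dots> \<le> 4 * q" using ln_le_minus_one[OF q] by simp
  finally have l: "ln t \<le> 4 * q" .
  have l0: "ln t \<ge> 0" using t by simp
  have "(ln t)^2 \<le> (4 * q)^2" using l l0 by (intro power_mono) auto
  also have "\<dots> = 16 * sqrt t" unfolding q_def using t by (simp add: power_mult_distrib)
  finally show ?thesis .
qed

lemma vsq_le: "x \<in> ball 0 R \<Longrightarrow> (vf k x)^2 \<le> 8 * A^2 * R * hh 1 (eps k) x"
proof -
  assume x: "x \<in> ball 0 R"
  define e where "e = eps k"
  define s where "s = x \<bullet> x"
  define M where "M = max (norm x) e"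
  define t where "t = (R^2 + e^2) / (s + e^2)"
  have e: "e > 0" "e \<le> R" using eps_pos eps_le e_def by auto
  have s: "s \<ge> 0" unfolding s_def by simp
  have sR: "s \<le> R^2" unfolding s_def using x by (simp add: power2_norm_eq_inner[symmetric] power_mono less_imp_le)
  have M: "M > 0" using e M_def by simp
  have M2: "M^2 \<le> s + e^2" using M_sq[of x e] M_def s_def by simp
  have se: "s + e^2 > 0" using s e by (simp add: add_nonneg_pos)
  have t1: "t \<ge> 1" unfolding t_def using sR se by simp
  have "t \<le> 2 * R^2 / (s + e^2)" unfolding t_def using e se
    by (intro divide_right_mono) (auto simp: power_mono)
  also have "\<dots> \<le> 2 * R^2 / M^2" using M2 M R se by (intro divide_left_mono) auto
  also have "\<dots> \<le> (2 * R / M)^2" using R M by (simp add: power_mult_distrib power_divide field_simps)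
  finally have "sqrt t \<le> 2 * R / M" using R M by (metis real_sqrt_le_mono real_sqrt_abs abs_of_pos divide_pos_pos mult_pos_pos zero_less_numeral)
  hence "(ln t)^2 \<le> 16 * (2 * R / M)" using ln_sq_le[OF t1] by linarith
  hence l: "A^2 / 4 * (ln t)^2 \<le> A^2 / 4 * (16 * (2 * R / M))" by (intro mult_left_mono) auto
  have "(vf k x)^2 = A^2 / 4 * (ln t)^2"
    unfolding vf_def t_def s_def e_def by (simp add: power_mult_distrib power_divide)
  also note l
  also have "A^2 / 4 * (16 * (2 * R / M)) = 8 * A^2 * R * hh 1 (eps k) x"
    unfolding hh_def M_def[symmetric] e_def[symmetric] by simp
  finally show ?thesis .
qed

lemma vsq_int: "integral (ball 0 R) (\<lambda>x. (vf k x)^2) \<le> 8 * A^2 * R * (pi * R * (1 + b))"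
proof -
  have gi: "(\<lambda>x. (vf k x)^2) integrable_on ball 0 R"
    using cont_aint[OF continuous_on_subset[OF continuous_on_power[OF v_cont]]] set_lebesgue_integral_eq_integral(1) by blast
  have hi: "hh 1 (eps k) integrable_on ball 0 R"
    using hh_aint[OF eps_pos] set_lebesgue_integral_eq_integral(1) by blast
  have hi2: "(\<lambda>x. 8 * A^2 * R * hh 1 (eps k) x) integrable_on ball 0 R"
    using integrable_on_cmult_left[OF hi, of "8 * A^2 * R"] by simp
  have "integral (ball 0 R) (\<lambda>x. (vf k x)^2) \<le> integral (ball 0 R) (\<lambda>x. 8 * A^2 * R * hh 1 (eps k) x)"
    by (rule integral_le[OF gi hi2 vsq_le])
  also have "\<dots> = 8 * A^2 * R * integral (ball 0 R) (hh 1 (eps k))" by simp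
  also have "\<dots> \<le> 8 * A^2 * R * (pi * R * (1 + b))"
  proof (intro mult_left_mono)
    have "pi * R * b / b^k \<ge> 0" using R b by simp
    thus "integral (ball 0 R) (hh 1 (eps k)) \<le> pi * R * (1 + b)"
      using hh1_bound[OF R b, of k] by (simp add: eps_def)
  qed (use R in auto)
  finally show ?thesis .
qed

end



lemma adm:
  assumes g: "g > 0" and R: "R > 0" and b: "b > 1" and m: "m > 0" and A: "A > 0"
  shows "admissible g R (uf R b m k) (vf R b A k)"
proof -
  note ctx = R b m A
  have uc: "continuous_on UNIV (uf R b m k)" by (rule u_cont[OF ctx])
  have vc: "continuous_on UNIV (vf R b A k)" by (rule v_cont[OF ctx])
  have "\<forall>x\<in>ball 0 R. uf R b m k x \<ge> 0 \<and> vf R b A k x \<ge> 0"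
    using u_ge0[OF ctx] v_ge0[OF ctx] by blast
  moreover have "radial_on (ball 0 R) (uf R b m k)"
    unfolding radial_on_def by (auto simp: uf_def[OF ctx] wq_def[OF ctx])
  moreover have "radial_on (ball 0 R) (vf R b A k)"
    unfolding radial_on_def by (auto simp: vf_def[OF ctx] power2_norm_eq_inner[symmetric])
  moreover have "\<forall>x\<in>ball 0 R. vf R b A k differentiable (at x)"
    unfolding vf_eq[OF ctx] differentiable_def using v_deriv[OF eps_pos[OF ctx] c_pos[OF ctx]] by blast
  moreover have "uf R b m k absolutely_integrable_on ball 0 R"
    by (rule cont_aint[OF continuous_on_subset[OF uc]]) auto
  moreover have "(\<lambda>x. Gfun g (uf R b m k x)) absolutely_integrable_on ball 0 R"
    by (rule cont_aint[OF continuous_on_subset[OF G_cont[OF uc]]]) auto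
  moreover have "(\<lambda>x. uf R b m k x * vf R b A k x) absolutely_integrable_on ball 0 R"
    by (rule cont_aint[OF continuous_on_subset[OF continuous_on_mult[OF uc vc]]]) auto
  moreover have "grad_sq (vf R b A k) absolutely_integrable_on ball 0 R"
    by (rule cont_aint[OF continuous_on_subset[OF grad_cont[OF ctx]]]) auto
  moreover have "(\<lambda>x. (vf R b A k x)^2) absolutely_integrable_on ball 0 R"
    by (rule cont_aint[OF continuous_on_subset[OF continuous_on_power[OF vc]]]) auto
  ultimately show ?thesis unfolding admissible_def
    using continuous_on_subset[OF uc] continuous_on_subset[OF vc] by auto
qed


lemma F_le:
  assumes g: "g > 0" and R: "R > 0" and b: "b > 1" and m: "m > 0" and A: "A > 0"
  shows "Ffun g R (uf R b m k) (vf R b A k) \<le>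
     ((1+g)*m*ln ((pi*R^2 + 8*m)/(pi*R^2)) + (g+1)*(R^2*pi) + m*A*ln 2/2 + A^2*pi/2 + 4*A^2*R*(pi*R*(1+b)))
     + real k * (2*(1+g)*m*ln b - m*A*ln b + A^2*pi*(b^2-1)/2)"
proof -
  note ctx = R b m A
  define e where "e = eps R b k"
  define U where "U = m / WW R b k"
  define K where "K = (pi*R^2 + 8*m)/(pi*R^2)"
  have bk: "b^k \<ge> 1" "b^k > 0" using b by auto
  have e_eq: "e = R / b^k" unfolding e_def by (simp add: eps_def[OF ctx])
  have e: "e > 0" unfolding e_def by (rule eps_pos[OF ctx])
  have U0: "U > 0" unfolding U_def using W_pos[OF ctx] m by simp
  have Ule: "U \<le> 8 * m / (pi * e^2)" unfolding U_def e_def by (rule U_le[OF ctx])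
  have pe: "pi * e^2 = pi * R^2 / (b^k)^2" unfolding e_eq by (simp add: power_divide)
  have "1 + U \<le> 1 + 8 * m / (pi * e^2)" using Ule by simp
  also have "\<dots> = 1 + 8 * m * (b^k)^2 / (pi * R^2)" unfolding pe using bk R by simp
  also have "\<dots> \<le> (b^k)^2 + 8 * m * (b^k)^2 / (pi * R^2)" using bk by simp
  also have "\<dots> = K * (b^k)^2" unfolding K_def using R by (simp add: field_simps)
  finally have "1 + U \<le> K * (b^k)^2" .
  hence "ln (1 + U) \<le> ln (K * (b^k)^2)" using U0 by simp
  also have "\<dots> = ln K + 2 * real k * ln b"
  proof -
    have Kp: "K > 0" unfolding K_def using R m by (simp add: add_pos_pos)
    have "(b^k)^2 > 0" using b by simp
    hence "ln (K * (b^k)^2) = ln K + ln ((b^k)^2)" using Kp by (simp add: ln_mult_pos)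
    also have "ln ((b^k)^2) = 2 * ln (b^k)" using bk by (simp add: ln_realpow)
    also have "ln (b^k) = real k * ln b" using b by (simp add: ln_realpow)
    finally show ?thesis by simp
  qed
  finally have I2: "ln (1 + U) \<le> ln K + 2 * real k * ln b" .
  have I2': "(1+g) * ln (1 + U) * m \<le> (1+g) * m * ln K + real k * (2*(1+g)*m*ln b)"
  proof -
    have "(1+g) * m * ln (1 + U) \<le> (1+g) * m * (ln K + 2 * real k * ln b)"
      using I2 g m by (intro mult_left_mono) auto
    thus ?thesis by (simp add: algebra_simps)
  qed
  have I1: "integral (ball 0 R) (\<lambda>x. Gfun g (uf R b m k x)) \<le> (1+g) * ln (1 + U) * m + (g+1) * (R^2 * pi)"
    unfolding U_def by (rule intG_le[OF ctx g])
  have l1: "R^2 / (2 * e^2) \<le> (R^2 + e^2) / (2 * e^2)" using e by (simp add: divide_right_mono)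
  have l2: "R^2 / (2 * e^2) > 0" using e R by simp
  have "ln (R^2 / (2 * e^2)) \<le> ln ((R^2 + e^2) / (2 * e^2))" using ln_mono[OF l1 l2] .
  moreover have "ln (R^2 / (2 * e^2)) = 2 * real k * ln b - ln 2"
  proof -
    have h1: "R^2 / (2 * e^2) = (b^k)^2 / 2" unfolding e_eq using R bk by (simp add: field_simps power_divide)
    have "(b^k)^2 > 0" using b by simp
    hence h2: "ln ((b^k)^2 / 2) = ln ((b^k)^2) - ln 2" by (simp add: ln_div)
    have h3: "ln ((b^k)^2) = 2 * ln (b^k)" using b by (simp add: ln_realpow)
    have h4: "ln (b^k) = real k * ln b" using b by (simp add: ln_realpow)
    show ?thesis unfolding h1 h2 h3 h4 by simp
  qed
  ultimately have "V0 R b A k \<ge> A/2 * (2 * real k * ln b - ln 2)"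
    unfolding V0_def[OF ctx] e_def[symmetric] using A by (intro mult_left_mono) auto
  hence "V0 R b A k * m \<ge> A/2 * (2 * real k * ln b - ln 2) * m" using m by (intro mult_right_mono) auto
  hence I3: "integral (ball 0 R) (\<lambda>x. uf R b m k x * vf R b A k x) \<ge> real k * (m*A*ln b) - m*A*ln 2/2"
    using uv_int[OF ctx, of k] by (simp add: algebra_simps)
  have I4: "integral (ball 0 R) (grad_sq (vf R b A k)) \<le> A^2 * (pi + real k * pi * (b^2 - 1))"
    by (rule grad_int[OF ctx])
  have I5: "integral (ball 0 R) (\<lambda>x. (vf R b A k x)^2) \<le> 8 * A^2 * R * (pi * R * (1 + b))"
    by (rule vsq_int[OF ctx])
  have I4': "1/2 * integral (ball 0 R) (grad_sq (vf R b A k)) \<le> A^2*pi/2 + real k * (A^2*pi*(b^2-1)/2)"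
  proof -
    define Z where "Z = A^2*pi/2 + real k * (A^2*pi*(b^2-1)/2)"
    have "A^2 * (pi + real k * pi * (b^2 - 1)) = 2 * Z"
      unfolding Z_def by (simp add: field_simps)
    hence "integral (ball 0 R) (grad_sq (vf R b A k)) \<le> 2 * Z" using I4 by simp
    thus ?thesis unfolding Z_def[symmetric] by linarith
  qed
  have I5': "1/2 * integral (ball 0 R) (\<lambda>x. (vf R b A k x)^2) \<le> 4*A^2*R*(pi*R*(1+b))"
    using I5 by simp
  have dist: "real k * (2*(1+g)*m*ln b - m*A*ln b + A^2*pi*(b^2-1)/2) =
     real k * (2*(1+g)*m*ln b) - real k * (m*A*ln b) + real k * (A^2*pi*(b^2-1)/2)"
    by (simp add: algebra_simps)
  show ?thesis unfolding Ffun_def K_def[symmetric] dist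
    using I1 I2' I3 I4' I5' by linarith
qed


lemma idD: fixes m l x g :: real
  shows "2*(1+g)*m*l - m*(m/(2*pi))*l + (m/(2*pi))^2*pi*x/2 = m/(8*pi)*(m*x - l*(4*m - 2*(8*pi*(1+g))))"
  by (simp add: field_simps power2_eq_square)

lemma D_neg:
  fixes g m :: real
  assumes g: "g > 0" and m: "m > 8 * pi * (1 + g)"
  defines "c \<equiv> 8 * pi * (1 + g)"
  defines "\<delta> \<equiv> (m - c) / (4 * m)"
  shows "2*(1+g)*m*ln (1+\<delta>) - m*(m/(2*pi))*ln (1+\<delta>) + (m/(2*pi))^2*pi*((1+\<delta>)^2-1)/2 < 0"
proof -
  have c: "c > 0" unfolding c_def using g by (simp add: add_pos_pos)
  have mc: "m > c" using m c_def by simp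
  have m0: "m > 0" using mc c by simp
  have d0: "\<delta> > 0" unfolding \<delta>_def using mc m0 by simp
  have d1: "\<delta> < 1/4" unfolding \<delta>_def using c m0 by (simp add: field_simps)
  define l where "l = ln (1+\<delta>)"
  have "ln (1 / (1+\<delta>)) \<le> 1 / (1+\<delta>) - 1" using d0 by (intro ln_le_minus_one) simp
  hence l1: "l \<ge> \<delta> / (1+\<delta>)" unfolding l_def using d0 by (simp add: ln_div field_simps)
  have P: "4*m - 2*c > 0" using mc c by simp
  have F1: "l * (4*m - 2*c) \<ge> \<delta> / (1+\<delta>) * (4*m - 2*c)" using l1 P by (intro mult_right_mono) auto
  have H: "m * (2+\<delta>) * (1+\<delta>) < 4*m - 2*c"
  proof -
    have "\<delta>^2 \<le> \<delta>" using d0 d1 by (simp add: power2_eq_square mult_le_cancel_right1)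
    hence "(2+\<delta>) * (1+\<delta>) \<le> 2 + 4*\<delta>" by (simp add: algebra_simps power2_eq_square)
    hence "m * ((2+\<delta>) * (1+\<delta>)) \<le> m * (2 + 4*\<delta>)" using m0 by (intro mult_left_mono) auto
    also have "m * (2 + 4*\<delta>) = 3*m - c" unfolding \<delta>_def using m0 by (simp add: field_simps)
    finally show ?thesis using mc by (simp add: mult.assoc)
  qed
  have "\<delta> * (m * (2+\<delta>) * (1+\<delta>)) < \<delta> * (4*m - 2*c)" by (rule mult_strict_left_mono[OF H d0])
  hence "\<delta> * (m * (2+\<delta>) * (1+\<delta>)) / (1+\<delta>) < \<delta> * (4*m - 2*c) / (1+\<delta>)"
    by (rule divide_strict_right_mono) (use d0 in simp)
  moreover have "\<delta> * (m * (2+\<delta>) * (1+\<delta>)) / (1+\<delta>) = m * \<delta> * (2+\<delta>)"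
  proof -
    have "1 + \<delta> \<noteq> 0" using d0 by simp
    have "\<delta> * (m * (2+\<delta>) * (1+\<delta>)) = (m * \<delta> * (2+\<delta>)) * (1+\<delta>)" by (simp add: algebra_simps)
    thus ?thesis using \<open>1 + \<delta> \<noteq> 0\<close> by simp
  qed
  moreover have "\<delta> * (4*m - 2*c) / (1+\<delta>) = \<delta> / (1+\<delta>) * (4*m - 2*c)" by simp
  ultimately have F2: "m * \<delta> * (2+\<delta>) < \<delta> / (1+\<delta>) * (4*m - 2*c)" by (simp only:)
  have F3: "m * ((1+\<delta>)^2 - 1) = m * \<delta> * (2+\<delta>)" by (simp add: power2_eq_square algebra_simps)
  have E: "m * ((1+\<delta>)^2 - 1) - l * (4*m - 2*c) < 0" using F1 F2 F3 by linarith
  have "2*(1+g)*m*l - m*(m/(2*pi))*l + (m/(2*pi))^2*pi*((1+\<delta>)^2-1)/2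
        = m / (8*pi) * (m * ((1+\<delta>)^2 - 1) - l * (4*m - 2*c))"
    unfolding c_def by (rule idD)
  also have "\<dots> < 0" using E m0 by (intro mult_pos_neg) auto
  finally show ?thesis unfolding l_def .
qed

theorem lemma4p7:
  fixes \<gamma> R m :: real
  assumes "\<gamma> > 0" and "R > 0" and "m > 8 * pi * (1 + \<gamma>)"
  shows "\<exists>u v :: nat \<Rightarrow> R2 \<Rightarrow> real.
           (\<forall>k. admissible \<gamma> R (u k) (v k) \<and> integral (ball 0 R) (u k) = m) \<and>
           filterlim (\<lambda>k. Ffun \<gamma> R (u k) (v k)) at_bot sequentially"
proof -
  define \<delta> where "\<delta> = (m - 8 * pi * (1 + \<gamma>)) / (4 * m)"
  define b where "b = 1 + \<delta>"
  define A where "A = m / (2*pi)"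
  have g: "\<gamma> > 0" and R: "R > 0" using assms by auto
  have "8*pi*(1+\<gamma>) > 0" using g by (simp add: add_pos_pos)
  hence m: "m > 0" using assms(3) by linarith
  have b: "b > 1" unfolding b_def \<delta>_def using assms(3) m by simp
  have A: "A > 0" unfolding A_def using m by simp
  define C0 where "C0 = ((1+\<gamma>)*m*ln ((pi*R^2 + 8*m)/(pi*R^2)) + (\<gamma>+1)*(R^2*pi) + m*A*ln 2/2 + A^2*pi/2 + 4*A^2*R*(pi*R*(1+b)))"
  define D where "D = 2*(1+\<gamma>)*m*ln b - m*A*ln b + A^2*pi*(b^2-1)/2"
  have D: "D < 0" unfolding D_def b_def A_def \<delta>_def using D_neg[OF g assms(3)] by simp
  have Fle: "\<And>k. Ffun \<gamma> R (uf R b m k) (vf R b A k) \<le> C0 + real k * D"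
    unfolding C0_def D_def using F_le[OF g R b m A] by blast
  show ?thesis
  proof (intro exI conjI allI)
    fix k
    show "admissible \<gamma> R (uf R b m k) (vf R b A k)" by (rule adm[OF g R b m A])
    show "integral (ball 0 R) (uf R b m k) = m" by (rule u_int[OF R b m A])
  next
    show "filterlim (\<lambda>k. Ffun \<gamma> R (uf R b m k) (vf R b A k)) at_bot sequentially"
      unfolding filterlim_at_bot
    proof
      fix Z :: real
      define N where "N = nat \<lceil>(C0 - Z) / (- D)\<rceil>"
      show "eventually (\<lambda>k. Ffun \<gamma> R (uf R b m k) (vf R b A k) \<le> Z) sequentially"
        unfolding eventually_sequentially
      proof (intro exI allI impI)
        fix k assume k: "k \<ge> N"
        have "real k \<ge> (C0 - Z) / (- D)" using k unfolding N_def by linarith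
        hence "(C0 - Z) / (- D) * (- D) \<le> real k * (- D)" by (rule mult_right_mono) (use D in simp)
        moreover have "(C0 - Z) / (- D) * (- D) = C0 - Z" using D by simp
        ultimately have "real k * (- D) \<ge> C0 - Z" by simp
        thus "Ffun \<gamma> R (uf R b m k) (vf R b A k) \<le> Z" using Fle[of k] by (simp add: algebra_simps)
      qed
    qed
  qed
qed


end
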